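(* Consider the heterogeneous agents $\dot x_i=\sum_{j=1}^N\alpha_{ij}(t)(\mathrm{sat}_j(x_j)-\mathrm{sat}_i(x_i))$, $i\in\{1,\dots,N\}$, with $s_1>s_2>\dots>s_N>0$ and time-varying undirected weights satisfying the standing assumptions. Let $k\in\{1,\dots,N\}$ and $\mathcal V_k=\{1,\dots,k\}$. If $x_i(t^* )\in[-s_k,s_k]$ for all $i\in\mathcal V_k$ at some $t^*\ge t_0$, then $x_i(t)\in[-s_k,s_k]$ for all $i\in\mathcal V_k$ and all $t\ge t^*$.
   Context: $\mathrm{sat}_i(x)=\mathrm{sign}(x)\min\{|x|,s_i\}$. Standing assumptions: $\alpha_{ij}(t)=\alpha_{ji}(t)\ge0$, each $\alpha_{ij}$ continuous on $[0,\infty)$ except on a set of measure zero; Carathéodory solutions. *)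

theory Defs
  imports "HOL-Analysis.Analysis"
begin

definition sat :: "real \<Rightarrow> real \<Rightarrow> real" where
  "sat si v = sgn v * min \<bar>v\<bar> si"

definition rhs :: "nat \<Rightarrow> (nat \<Rightarrow> real) \<Rightarrow> (nat \<Rightarrow> nat \<Rightarrow> real \<Rightarrow> real)
                    \<Rightarrow> (nat \<Rightarrow> real \<Rightarrow> real) \<Rightarrow> nat \<Rightarrow> real \<Rightarrow> real" where
  "rhs N s \<alpha> x i t = (\<Sum>j\<in>{1..N}. \<alpha> i j t * (sat (s j) (x j t) - sat (s i) (x i t)))"

definition weights_ok :: "nat \<Rightarrow> (nat \<Rightarrow> nat \<Rightarrow> real \<Rightarrow> real) \<Rightarrow> bool" where
  "weights_ok N \<alpha> \<longleftrightarrow>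
     (\<forall>i\<in>{1..N}. \<forall>j\<in>{1..N}. \<forall>t\<ge>0. \<alpha> i j t = \<alpha> j i t \<and> \<alpha> i j t \<ge> 0) \<and>
     (\<forall>i\<in>{1..N}. \<forall>j\<in>{1..N}. \<exists>Z. Z \<in> null_sets lborel \<and>
         (\<forall>t\<in>{0..} - Z. continuous (at t within {0..}) (\<alpha> i j)))"

text \<open>Caratheodory solution on [t0, inf): each x_i is absolutely continuous on compact
  intervals, i.e. it is the integral of its (Lebesgue integrable) right-hand side.\<close>
definition carath_solution :: "nat \<Rightarrow> (nat \<Rightarrow> real) \<Rightarrow> (nat \<Rightarrow> nat \<Rightarrow> real \<Rightarrow> real)
                    \<Rightarrow> real \<Rightarrow> (nat \<Rightarrow> real \<Rightarrow> real) \<Rightarrow> bool" where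
  "carath_solution N s \<alpha> t0 x \<longleftrightarrow>
     (\<forall>i\<in>{1..N}. \<forall>t\<ge>t0.
        rhs N s \<alpha> x i absolutely_integrable_on {t0..t} \<and>
        x i t = x i t0 + integral {t0..t} (rhs N s \<alpha> x i))"

end

theory Submission
  imports Defs
begin

lemma finite_delta:
  assumes "finite I" "\<forall>i\<in>I. \<exists>d>0. P i d"
    "\<And>i d d'. P i d \<Longrightarrow> 0 < d' \<Longrightarrow> d' \<le> d \<Longrightarrow> P i d'"
  shows "\<exists>d>(0::real). \<forall>i\<in>I. P i d"
  using assms(1,2)
proof (induction I rule: finite_induct)
  case empty then show ?case by (auto intro: exI[of _ 1])
next
  case (insert a F)
  then obtain d1 where d1: "d1 > 0" "\<forall>i\<in>F. P i d1" by auto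
  from insert obtain d2 where d2: "d2 > 0" "P a d2" by auto
  show ?case
    apply (rule exI[of _ "min d1 d2"])
    using d1 d2 assms(3)[of _ d1 "min d1 d2"] assms(3)[of a d2 "min d1 d2"] by auto
qed

lemma lyap:
  fixes I :: "'i set" and y f :: "'i \<Rightarrow> real \<Rightarrow> real" and \<Phi> \<psi> :: "real \<Rightarrow> real"
  assumes fin: "finite I" and ab: "a \<le> b"
  and cont: "\<forall>i\<in>I. continuous_on {a..b} (y i)"
  and intg: "\<forall>i\<in>I. f i absolutely_integrable_on {a..b}"
  and ftc: "\<forall>i\<in>I. \<forall>u v. a \<le> u \<longrightarrow> u \<le> v \<longrightarrow> v \<le> b \<longrightarrow> y i v - y i u = integral {u..v} (f i)"
  and conv: "\<forall>u v. \<Phi> v - \<Phi> u \<le> \<psi> v * (v - u)"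
  and psic: "continuous_on UNIV \<psi>"
  and neg: "\<forall>t\<in>{a..b}. (\<Sum>i\<in>I. \<psi> (y i t) * f i t) \<le> 0"
  shows "(\<Sum>i\<in>I. \<Phi> (y i b)) \<le> (\<Sum>i\<in>I. \<Phi> (y i a))"
proof -
  have fI: "f i integrable_on {u..v}" and gI: "(\<lambda>t. \<bar>f i t\<bar>) integrable_on {u..v}"
    if "i \<in> I" "a \<le> u" "v \<le> b" for i u v
  proof -
    have "f i integrable_on {a..b}" "(\<lambda>t. norm (f i t)) integrable_on {a..b}"
      using intg that absolutely_integrable_on_def by blast+
    then show "f i integrable_on {u..v}" "(\<lambda>t. \<bar>f i t\<bar>) integrable_on {u..v}"
    proof -
      have sub: "{u..v} \<subseteq> {a..b}" using that by auto
      show "f i integrable_on {u..v}" "(\<lambda>t. \<bar>f i t\<bar>) integrable_on {u..v}"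
        using integrable_on_subinterval[OF _ sub] \<open>f i integrable_on {a..b}\<close>
          \<open>(\<lambda>t. norm (f i t)) integrable_on {a..b}\<close> by (auto simp: real_norm_def)
    qed
  qed
  define K where "K = (\<Sum>i\<in>I. integral {a..b} (\<lambda>t. \<bar>f i t\<bar>))"
  have key: "(\<Sum>i\<in>I. \<Phi> (y i b)) \<le> (\<Sum>i\<in>I. \<Phi> (y i a)) + e * K" if e: "e > 0" for e
  proof -
    have "\<forall>i\<in>I. \<exists>d>0. \<forall>u\<in>{a..b}. \<forall>v\<in>{a..b}. \<bar>u - v\<bar> < d \<longrightarrow> \<bar>\<psi> (y i u) - \<psi> (y i v)\<bar> < e"
    proof
      fix i assume i: "i \<in> I"
      have "continuous_on {a..b} (\<psi> \<circ> y i)"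
        using cont i psic continuous_on_compose continuous_on_subset by (metis subset_UNIV)
      then have "uniformly_continuous_on {a..b} (\<psi> \<circ> y i)"
        using compact_uniformly_continuous compact_Icc by blast
      then obtain d where "d > 0" "\<forall>v\<in>{a..b}. \<forall>u\<in>{a..b}. dist u v < d \<longrightarrow> dist ((\<psi> \<circ> y i) u) ((\<psi> \<circ> y i) v) < e"
        using e unfolding uniformly_continuous_on_def by blast
      then show "\<exists>d>0. \<forall>u\<in>{a..b}. \<forall>v\<in>{a..b}. \<bar>u - v\<bar> < d \<longrightarrow> \<bar>\<psi> (y i u) - \<psi> (y i v)\<bar> < e"
        by (auto simp: dist_real_def)
    qed
    then obtain d where d: "d > 0" and dI: "\<forall>i\<in>I. \<forall>u\<in>{a..b}. \<forall>v\<in>{a..b}. \<bar>u - v\<bar> < d \<longrightarrow> \<bar>\<psi> (y i u) - \<psi> (y i v)\<bar> < e"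
      using finite_delta[OF fin, where P="\<lambda>i d. \<forall>u\<in>{a..b}. \<forall>v\<in>{a..b}. \<bar>u - v\<bar> < d \<longrightarrow> \<bar>\<psi> (y i u) - \<psi> (y i v)\<bar> < e"]
      by force
    define W where "W t = (\<Sum>i\<in>I. \<Phi> (y i t)) - e * (\<Sum>i\<in>I. integral {a..t} (\<lambda>s. \<bar>f i s\<bar>))" for t
    have step: "W v \<le> W u" if uv: "a \<le> u" "u \<le> v" "v \<le> b" "v - u < d" for u v
    proof -
      have "(\<Sum>i\<in>I. \<Phi> (y i v)) - (\<Sum>i\<in>I. \<Phi> (y i u)) = (\<Sum>i\<in>I. \<Phi> (y i v) - \<Phi> (y i u))"
        by (simp add: sum_subtractf)
      also have "\<dots> \<le> (\<Sum>i\<in>I. \<psi> (y i v) * (y i v - y i u))"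
        using conv by (intro sum_mono) auto
      also have "\<dots> = (\<Sum>i\<in>I. \<psi> (y i v) * integral {u..v} (f i))"
        using ftc uv by (intro sum.cong) auto
      also have "\<dots> = integral {u..v} (\<lambda>t. \<Sum>i\<in>I. \<psi> (y i v) * f i t)"
        using fI uv by (subst integral_sum[OF fin]) (auto intro: integrable_on_mult_right)
      also have "\<dots> \<le> integral {u..v} (\<lambda>t. e * (\<Sum>i\<in>I. \<bar>f i t\<bar>))"
      proof (rule integral_le)
        show "(\<lambda>t. \<Sum>i\<in>I. \<psi> (y i v) * f i t) integrable_on {u..v}"
          using fI uv by (auto intro!: integrable_sum[OF fin] integrable_on_mult_right)
        show "(\<lambda>t. e * (\<Sum>i\<in>I. \<bar>f i t\<bar>)) integrable_on {u..v}"
          using gI uv by (auto intro!: integrable_sum[OF fin] integrable_on_mult_right)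
        fix t assume t: "t \<in> {u..v}"
        have "(\<Sum>i\<in>I. \<psi> (y i v) * f i t) = (\<Sum>i\<in>I. \<psi> (y i t) * f i t) + (\<Sum>i\<in>I. (\<psi> (y i v) - \<psi> (y i t)) * f i t)"
          by (simp add: sum.distrib[symmetric] algebra_simps)
        also have "\<dots> \<le> 0 + (\<Sum>i\<in>I. e * \<bar>f i t\<bar>)"
        proof (rule add_mono)
          show "(\<Sum>i\<in>I. \<psi> (y i t) * f i t) \<le> 0" using neg t uv by auto
          show "(\<Sum>i\<in>I. (\<psi> (y i v) - \<psi> (y i t)) * f i t) \<le> (\<Sum>i\<in>I. e * \<bar>f i t\<bar>)"
          proof (rule sum_mono)
            fix i assume i: "i \<in> I"
            have "\<bar>\<psi> (y i v) - \<psi> (y i t)\<bar> < e" using dI i t uv by auto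
            then have "\<bar>(\<psi> (y i v) - \<psi> (y i t)) * f i t\<bar> \<le> e * \<bar>f i t\<bar>"
              by (simp add: abs_mult mult_right_mono)
            then show "(\<psi> (y i v) - \<psi> (y i t)) * f i t \<le> e * \<bar>f i t\<bar>" by linarith
          qed
        qed
        finally show "(\<Sum>i\<in>I. \<psi> (y i v) * f i t) \<le> e * (\<Sum>i\<in>I. \<bar>f i t\<bar>)"
          by (simp add: sum_distrib_left)
      qed
      also have "\<dots> = e * (\<Sum>i\<in>I. integral {u..v} (\<lambda>t. \<bar>f i t\<bar>))"
        using gI uv by (simp add: integral_sum[OF fin])
      also have "\<dots> = e * (\<Sum>i\<in>I. integral {a..v} (\<lambda>t. \<bar>f i t\<bar>)) - e * (\<Sum>i\<in>I. integral {a..u} (\<lambda>t. \<bar>f i t\<bar>))"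
      proof -
        have "integral {u..v} (\<lambda>t. \<bar>f i t\<bar>) = integral {a..v} (\<lambda>t. \<bar>f i t\<bar>) - integral {a..u} (\<lambda>t. \<bar>f i t\<bar>)"
          if "i \<in> I" for i
          using Henstock_Kurzweil_Integration.integral_combine[where a=a and c=u and b=v and f="\<lambda>t. \<bar>f i t\<bar>"] gI[where i=i and u=a and v=v] that uv by auto
        then show ?thesis by (simp add: sum_subtractf right_diff_distrib)
      qed
      finally show ?thesis unfolding W_def by linarith
    qed
    have chain: "\<forall>t. a \<le> t \<and> t \<le> b \<and> t \<le> a + real n * (d/2) \<longrightarrow> W t \<le> W a" for n
    proof (induction n)
      case 0 then show ?case by auto
    next
      case (Suc n)
      show ?case
      proof (intro allI impI)
        fix t assume t: "a \<le> t \<and> t \<le> b \<and> t \<le> a + real (Suc n) * (d/2)"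
        show "W t \<le> W a"
        proof (cases "t \<le> a + real n * (d/2)")
          case True then show ?thesis using Suc t by auto
        next
          case False
          let ?u = "a + real n * (d/2)"
          have "t - ?u \<le> d/2" using t by (simp add: field_simps)
          then have "t - ?u < d" using d by linarith
          moreover have "a \<le> ?u" using d by simp
          ultimately have "W t \<le> W ?u" using step[of ?u t] t False by linarith
          also have "\<dots> \<le> W a" using Suc t False d by auto
          finally show ?thesis .
        qed
      qed
    qed
    obtain n where n: "(b - a) / (d/2) \<le> real n" using real_arch_simple by blast
    have "b \<le> a + real n * (d/2)" using n d by (simp add: field_simps)
    then have "W b \<le> W a" using chain[of n] ab by auto
    then show ?thesis unfolding W_def K_def by simp
  qed
  have K0: "K \<ge> 0" unfolding K_def
    using gI ab by (auto intro!: sum_nonneg integral_nonneg)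
  show ?thesis
  proof (rule ccontr)
    assume "\<not> ?thesis"
    then have gap: "(\<Sum>i\<in>I. \<Phi> (y i b)) - (\<Sum>i\<in>I. \<Phi> (y i a)) > 0" by simp
    define e where "e = ((\<Sum>i\<in>I. \<Phi> (y i b)) - (\<Sum>i\<in>I. \<Phi> (y i a))) / (K + 1)"
    have e: "e > 0" using gap K0 unfolding e_def by simp
    have "e * K < (\<Sum>i\<in>I. \<Phi> (y i b)) - (\<Sum>i\<in>I. \<Phi> (y i a))"
      using gap K0 unfolding e_def by (simp add: field_simps)
    with key[OF e] show False by linarith
  qed
qed

lemma lastcross:
  fixes y f :: "real \<Rightarrow> real"
  assumes ab: "a \<le> b" and cont: "continuous_on {a..b} y"
  and ftc: "\<forall>u v. a \<le> u \<longrightarrow> u \<le> v \<longrightarrow> v \<le> b \<longrightarrow> y v - y u = integral {u..v} f"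
  and fi: "f integrable_on {a..b}" and ya: "y a \<le> c"
  and sg: "\<forall>t\<in>{a..b}. y t \<ge> c \<longrightarrow> f t \<le> 0"
  shows "y b \<le> c"
proof (rule ccontr)
  assume "\<not> y b \<le> c" hence yb: "y b > c" by simp
  define S where "S = {t\<in>{a..b}. y t = c}"
  obtain x0 where x0: "a \<le> x0" "x0 \<le> b" "y x0 = c" using IVT'[of y a c b] ya yb ab cont by auto
  have Sne: "S \<noteq> {}" using x0 unfolding S_def by auto
  have Sbdd: "bdd_above S" unfolding S_def by (auto intro: bdd_aboveI[of _ b])
  have Scl: "closed S" unfolding S_def using continuous_closed_preimage_constant[OF cont] by auto
  define \<sigma> where "\<sigma> = Sup S"
  have sS: "\<sigma> \<in> S" unfolding \<sigma>_def using closed_contains_Sup[OF Sne Sbdd Scl] .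
  then have s: "a \<le> \<sigma>" "\<sigma> \<le> b" "y \<sigma> = c" unfolding S_def by auto
  have above: "y t \<ge> c" if t: "\<sigma> \<le> t" "t \<le> b" for t
  proof (rule ccontr)
    assume "\<not> y t \<ge> c"
    then have yt: "y t \<le> c" by simp
    have "continuous_on {t..b} y" using cont continuous_on_subset s t by (meson atLeastatMost_subset_iff order.trans order.refl)
    then obtain x where x: "t \<le> x" "x \<le> b" "y x = c" using IVT'[of y t c b] yt yb t by auto
    then have "x \<in> S" unfolding S_def using s t by auto
    then have "x \<le> \<sigma>" unfolding \<sigma>_def using Sbdd by (simp add: cSup_upper)
    then have "t = \<sigma>" using x t by simp
    then show False using s \<open>\<not> y t \<ge> c\<close> by simp
  qed
  have "y b - y \<sigma> = integral {\<sigma>..b} f" using ftc s by auto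
  also have "\<dots> \<le> integral {\<sigma>..b} (\<lambda>_. 0::real)"
  proof (rule integral_le)
    show "f integrable_on {\<sigma>..b}" using integrable_on_subinterval[OF fi] s by auto
    show "(\<lambda>_. 0::real) integrable_on {\<sigma>..b}" by (rule integrable_0)
    fix t assume "t \<in> {\<sigma>..b}" then show "f t \<le> 0" using sg above s by auto
  qed
  also have "\<dots> = 0" by simp
  finally show False using s yb by simp
qed

lemma sat_id: "\<bar>v\<bar> \<le> s \<Longrightarrow> sat s v = v"
  unfolding sat_def by (cases "v > 0"; cases "v < 0") (auto simp: sgn_if)

lemma sat_mono: "0 \<le> s \<Longrightarrow> u \<le> v \<Longrightarrow> sat s u \<le> sat s v"
  unfolding sat_def by (auto simp: sgn_if min_def)

lemma sat_bound: assumes "0 \<le> s" shows "\<bar>sat s v\<bar> \<le> s"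
  using assms unfolding sat_def by (cases "0 < v"; cases "v < 0") (auto simp: sgn_if min_def abs_if)

lemma sat_abs_le: "0 \<le> s \<Longrightarrow> \<bar>sat s v\<bar> \<le> \<bar>v\<bar>"
  unfolding sat_def by (auto simp: sgn_if min_def abs_if)

lemma sat_hi: "0 \<le> s \<Longrightarrow> s \<le> v \<Longrightarrow> sat s v = s"
  unfolding sat_def by (auto simp: sgn_if min_def)

definition psi :: "real \<Rightarrow> real \<Rightarrow> real \<Rightarrow> real" where
  "psi c m v = min (max (v - c) 0) (m - c)"

definition Phi :: "real \<Rightarrow> real \<Rightarrow> real \<Rightarrow> real" where
  "Phi c m v = (if v \<le> c then 0 else if v \<le> m then (v - c)^2 / 2 else (m - c)^2/2 + (m - c) * (v - m))"

lemma Phi_conv: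
  assumes "c < m"
  shows "Phi c m v - Phi c m u \<le> psi c m v * (v - u)"
proof -
  have sq: "(u - c)^2/2 \<ge> (v - c)*(u - c) - (v-c)^2/2" for u v :: real
  proof -
    have "(u - c)^2/2 - ((v - c)*(u - c) - (v-c)^2/2) = (u-v)^2/2"
      by (simp add: power2_eq_square field_simps)
    moreover have "0 \<le> (u - v)^2/2" by simp
    ultimately show ?thesis by linarith
  qed
  let ?q = "m - c"
  have q: "?q > 0" using assms by simp
  consider "v \<le> c" | "c < v" "v \<le> m" | "m < v" by linarith
  then show ?thesis
  proof cases
    case 1
    have "Phi c m u \<ge> 0" unfolding Phi_def using q
      by (auto intro!: add_nonneg_nonneg mult_nonneg_nonneg)
    then show ?thesis using 1 assms unfolding Phi_def psi_def by (auto simp: min_def max_def)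
  next
    case 2
    note V = 2
    have ps: "psi c m v = v - c" using V unfolding psi_def by auto
    consider "u \<le> c" | "c < u" "u \<le> m" | "m < u" by linarith
    then show ?thesis
    proof cases
      case 1
      have "(v - c) * (v - c) \<le> (v - c) * (v - u)" using 1 V by (intro mult_left_mono) auto
      moreover have "0 \<le> (v-c)*(v-c)" by simp
      ultimately show ?thesis using 1 V unfolding ps unfolding Phi_def by (simp add: power2_eq_square)
    next
      case 3
      have h: "0 \<le> (m - v) * (u - m)" using V 3 by simp
      have "(v - c)^2/2 - ((m - c)^2/2 + (m - c) * (u - m)) - (v - c) * (v - u) = - ((m - v)^2/2) - (m - v) * (u - m)"
        by (simp add: power2_eq_square field_simps)
      moreover have "0 \<le> (m - v)^2/2" by simp
      moreover have "Phi c m v - Phi c m u = (v - c)^2/2 - ((m - c)^2/2 + (m - c) * (u - m))"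
        using V 3 unfolding Phi_def by auto
      ultimately show ?thesis using h unfolding ps by linarith
    next
      case 2
      have "Phi c m v - Phi c m u = (v - c)^2/2 - (u - c)^2/2"
        using V 2 unfolding Phi_def by auto
      moreover have "(v - c) * (v - u) = (v - c)^2 - (v - c) * (u - c)"
        by (simp add: power2_eq_square algebra_simps)
      ultimately show ?thesis using sq[of u v] mult.commute[of "u - c" "v - c"] unfolding ps by linarith
    qed
  next
    case 3
    note V = 3
    have ps: "psi c m v = m - c" using V assms unfolding psi_def by auto
    consider "u \<le> c" | "c < u" "u \<le> m" | "m < u" by linarith
    then show ?thesis
    proof cases
      case 1
      have "(m - c) * (m - c) / 2 \<le> (m - c) * (m - u)"
      proof -
        have "(m - c) * ((m - c)/2) \<le> (m - c) * (m - u)" using 1 q by (intro mult_left_mono) auto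
        then show ?thesis by simp
      qed
      then show ?thesis using 1 V assms unfolding ps unfolding Phi_def by (simp add: power2_eq_square algebra_simps)
    next
      case 2
      have "(m - c)^2 / 2 + (m - c) * (v - m) - (u - c)^2/2 - (m - c) * (v - u) = - ((m - u)^2/2)"
        by (simp add: power2_eq_square field_simps)
      moreover have "0 \<le> (m - u)^2/2" by simp
      moreover have "Phi c m v - Phi c m u = (m - c)^2 / 2 + (m - c) * (v - m) - (u - c)^2/2"
        using 2 V unfolding Phi_def by auto
      ultimately show ?thesis unfolding ps by linarith
    next
      case 3
      then show ?thesis using V assms unfolding ps unfolding Phi_def by (simp add: algebra_simps)
    qed
  qed
qed

definition D :: "real \<Rightarrow> real \<Rightarrow> real \<Rightarrow> real" where
  "D c m v = psi c m v - psi c m (- v)"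

definition Phi2 :: "real \<Rightarrow> real \<Rightarrow> real \<Rightarrow> real" where
  "Phi2 c m v = Phi c m v + Phi c m (- v)"

lemma Phi2_conv: "c < m \<Longrightarrow> Phi2 c m v - Phi2 c m u \<le> D c m v * (v - u)"
  using Phi_conv[of c m v u] Phi_conv[of c m "-v" "-u"] unfolding Phi2_def D_def
  by (simp add: algebra_simps)

lemma psi_cont: "continuous_on UNIV (psi c m)"
  unfolding psi_def by (intro continuous_intros)

lemma D_cont: "continuous_on UNIV (D c m)"
  unfolding D_def psi_def by (intro continuous_intros)

lemma Phi_zero: "v \<le> c \<Longrightarrow> Phi c m v = 0" unfolding Phi_def by simp

lemma Phi_pos: "c < m \<Longrightarrow> c < v \<Longrightarrow> Phi c m v > 0"
  unfolding Phi_def by (auto intro!: add_pos_nonneg)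

lemma Phi_nonneg: "c < m \<Longrightarrow> Phi c m v \<ge> 0"
  unfolding Phi_def by (auto intro!: add_nonneg_nonneg)

lemma Phi2_zero: "\<bar>v\<bar> \<le> c \<Longrightarrow> Phi2 c m v = 0" unfolding Phi2_def Phi_def by auto

lemma Phi2_nonneg: "c < m \<Longrightarrow> Phi2 c m v \<ge> 0"
  unfolding Phi2_def using Phi_nonneg by (simp add: add_nonneg_nonneg)

lemma Phi2_pos: "c < m \<Longrightarrow> \<bar>v\<bar> > c \<Longrightarrow> Phi2 c m v > 0"
  unfolding Phi2_def using Phi_pos[of c m v] Phi_pos[of c m "-v"] Phi_nonneg[of c m]
  by (cases "v > c") (auto simp: add_pos_nonneg add_nonneg_pos)

lemma D_mono: "u \<le> v \<Longrightarrow> D c m u \<le> D c m v"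
  unfolding D_def psi_def by (auto simp: min_def max_def)

lemma D_hi: "0 < c \<Longrightarrow> c < m \<Longrightarrow> m \<le> v \<Longrightarrow> D c m v = m - c"
  unfolding D_def psi_def by (auto simp: min_def max_def)

lemma D_lo: "0 < c \<Longrightarrow> c < m \<Longrightarrow> v \<le> - m \<Longrightarrow> D c m v = - (m - c)"
  unfolding D_def psi_def by (auto simp: min_def max_def)

lemma D_pos: "0 < c \<Longrightarrow> c < m \<Longrightarrow> D c m v > 0 \<Longrightarrow> v > c"
  unfolding D_def psi_def by (auto simp: min_def max_def split: if_splits)

lemma D_neg: "0 < c \<Longrightarrow> c < m \<Longrightarrow> D c m v < 0 \<Longrightarrow> v < - c"
  unfolding D_def psi_def by (auto simp: min_def max_def split: if_splits)

lemma pair_le: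
  assumes c: "0 < c" "c < m" and s: "m < si" "m < sj" and le: "xj \<le> xi"
  shows "(D c m xi - D c m xj) * (sat sj xj - sat si xi) \<le> 0"
proof (cases "D c m xi = D c m xj")
  case True then show ?thesis by simp
next
  case False
  have dm: "D c m xj \<le> D c m xi" using D_mono[OF le] .
  have "\<not> m \<le> xj" using False D_hi[OF c] le by force
  moreover have "\<not> xi \<le> - m" using False D_lo[OF c] le by force
  ultimately have xj: "xj < m" and xi: "- m < xi" by auto
  have "sat sj xj \<le> sat si xi"
  proof (cases "- m \<le> xj")
    case True
    then have "sat sj xj = xj" using xj s by (intro sat_id) auto
    moreover have "sat si xj = xj" using True xj s by (intro sat_id) auto
    moreover have "sat si xj \<le> sat si xi" using le s c by (intro sat_mono) auto
    ultimately show ?thesis by simp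
  next
    case False
    have "sat sj xj \<le> sat sj (- m)" using False s c by (intro sat_mono) auto
    also have "\<dots> = - m" using s c by (intro sat_id) auto
    also have "\<dots> = sat si (- m)" using s c by (intro sat_id[symmetric]) auto
    also have "\<dots> \<le> sat si xi" using xi s c by (intro sat_mono) auto
    finally show ?thesis .
  qed
  then show ?thesis using dm by (intro mult_nonneg_nonpos) auto
qed

lemma pair:
  assumes c: "0 < c" "c < m" and s: "m < si" "m < sj"
  shows "(D c m xi - D c m xj) * (sat sj xj - sat si xi) \<le> 0"
proof (cases "xj \<le> xi")
  case True then show ?thesis using pair_le[OF c s] by blast
next
  case False
  then have "(D c m xj - D c m xi) * (sat si xi - sat sj xj) \<le> 0"
    using pair_le[OF c s(2) s(1), of xi xj] by auto
  then show ?thesis by (simp add: algebra_simps)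
qed

lemma ext_term:
  assumes c: "0 < c" "c < m" "c < si" and w: "\<bar>w\<bar> \<le> c"
  shows "D c m xi * (w - sat si xi) \<le> 0"
proof -
  consider "D c m xi > 0" | "D c m xi < 0" | "D c m xi = 0" by linarith
  then show ?thesis
  proof cases
    case 1
    then have "xi > c" using D_pos c by blast
    then have "sat si c \<le> sat si xi" using c by (intro sat_mono) auto
    moreover have "sat si c = c" using c by (intro sat_id) auto
    ultimately show ?thesis using 1 w by (intro mult_nonneg_nonpos) auto
  next
    case 2
    then have "xi < - c" using D_neg c by blast
    then have "sat si xi \<le> sat si (-c)" using c by (intro sat_mono) auto
    moreover have "sat si (-c) = -c" using c by (intro sat_id) auto
    ultimately show ?thesis using 2 w by (intro mult_nonpos_nonneg) auto
  qed simp
qed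

lemma pointwise:
  fixes X :: "nat \<Rightarrow> real" and A :: "nat \<Rightarrow> nat \<Rightarrow> real" and s :: "nat \<Rightarrow> real"
  assumes kk: "1 \<le> k" "k \<le> N" and c: "0 < c" "c < m"
    and sI: "\<forall>i\<in>{1..<k}. m < s i"
    and sE: "\<forall>j\<in>{k..N}. \<bar>sat (s j) (X j)\<bar> \<le> c"
    and Asym: "\<forall>i\<in>{1..N}. \<forall>j\<in>{1..N}. A i j = A j i \<and> A i j \<ge> 0"
  shows "(\<Sum>i\<in>{1..<k}. D c m (X i) * (\<Sum>j\<in>{1..N}. A i j * (sat (s j) (X j) - sat (s i) (X i)))) \<le> 0"
proof -
  let ?L = "{1..<k}" and ?E = "{k..N}"
  let ?Dx = "\<lambda>i. D c m (X i)" and ?S = "\<lambda>i. sat (s i) (X i)"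
  have split: "{1..N} = ?L \<union> ?E" using kk by auto
  have disj: "?L \<inter> ?E = {}" by auto
  have "(\<Sum>i\<in>?L. ?Dx i * (\<Sum>j\<in>{1..N}. A i j * (?S j - ?S i)))
      = (\<Sum>i\<in>?L. \<Sum>j\<in>?L. A i j * ?Dx i * (?S j - ?S i)) + (\<Sum>i\<in>?L. \<Sum>j\<in>?E. A i j * ?Dx i * (?S j - ?S i))"
  proof -
    have "?Dx i * (\<Sum>j\<in>{1..N}. A i j * (?S j - ?S i)) = (\<Sum>j\<in>?L. A i j * ?Dx i * (?S j - ?S i)) + (\<Sum>j\<in>?E. A i j * ?Dx i * (?S j - ?S i))" for i
    proof -
      have "(\<Sum>j\<in>{1..N}. A i j * (?S j - ?S i)) = (\<Sum>j\<in>?L. A i j * (?S j - ?S i)) + (\<Sum>j\<in>?E. A i j * (?S j - ?S i))"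
        unfolding split by (rule sum.union_disjoint) (auto)
      then show ?thesis by (simp add: sum_distrib_left algebra_simps)
    qed
    then show ?thesis by (simp add: sum.distrib)
  qed
  also have "\<dots> \<le> 0 + 0"
  proof (rule add_mono)
    let ?S1 = "(\<Sum>i\<in>?L. \<Sum>j\<in>?L. A i j * ?Dx i * (?S j - ?S i))"
    have "?S1 = (\<Sum>j\<in>?L. \<Sum>i\<in>?L. A i j * ?Dx i * (?S j - ?S i))" by (rule sum.swap)
    also have "\<dots> = (\<Sum>i\<in>?L. \<Sum>j\<in>?L. A i j * ?Dx j * (?S i - ?S j))"
      using Asym kk by (intro sum.cong refl) auto
    finally have "2 * ?S1 = ?S1 + (\<Sum>i\<in>?L. \<Sum>j\<in>?L. A i j * ?Dx j * (?S i - ?S j))" by simp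
    also have "\<dots> = (\<Sum>i\<in>?L. \<Sum>j\<in>?L. A i j * ((?Dx i - ?Dx j) * (?S j - ?S i)))"
      by (simp add: sum.distrib[symmetric] algebra_simps)
    also have "\<dots> \<le> 0"
    proof (intro sum_nonpos)
      fix i j assume ij: "i \<in> ?L" "j \<in> ?L"
      then have "0 \<le> A i j" using Asym kk by auto
      moreover have "(?Dx i - ?Dx j) * (?S j - ?S i) \<le> 0"
        using pair[OF c, of "s i" "s j"] sI ij by auto
      ultimately show "A i j * ((?Dx i - ?Dx j) * (?S j - ?S i)) \<le> 0"
        by (rule mult_nonneg_nonpos)
    qed
    finally show "?S1 \<le> 0" by simp
    show "(\<Sum>i\<in>?L. \<Sum>j\<in>?E. A i j * ?Dx i * (?S j - ?S i)) \<le> 0"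
    proof (intro sum_nonpos)
      fix i j assume i: "i \<in> ?L" and j: "j \<in> ?E"
      have "A i j \<ge> 0" using Asym i j kk by auto
      moreover have "?Dx i * (?S j - ?S i) \<le> 0"
      proof -
        have "c < s i" using sI i c by force
        moreover have "\<bar>?S j\<bar> \<le> c" using sE j by blast
        ultimately show ?thesis using ext_term[OF c, of "s i" "?S j"] by blast
      qed
      ultimately show "A i j * ?Dx i * (?S j - ?S i) \<le> 0"
        by (simp add: mult.assoc mult_nonneg_nonpos)
    qed
  qed
  finally show ?thesis by simp
qed

lemma absint_int: "(f::real\<Rightarrow>real) absolutely_integrable_on S \<Longrightarrow> f integrable_on S"
  by (simp add: absolutely_integrable_on_def)

lemma sat_lo: "0 \<le> s \<Longrightarrow> v \<le> - s \<Longrightarrow> sat s v = - s"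
  unfolding sat_def by (auto simp: sgn_if min_def)

theorem lemma11:
  fixes N k :: nat and s :: "nat \<Rightarrow> real" and \<alpha> :: "nat \<Rightarrow> nat \<Rightarrow> real \<Rightarrow> real"
    and x :: "nat \<Rightarrow> real \<Rightarrow> real" and t0 tstar :: real
  assumes s_dec: "\<And>i j. i \<in> {1..N} \<Longrightarrow> j \<in> {1..N} \<Longrightarrow> i < j \<Longrightarrow> s j < s i"
    and s_pos: "s N > 0"
    and weights: "weights_ok N \<alpha>"
    and t0: "t0 \<ge> 0"
    and sol: "carath_solution N s \<alpha> t0 x"
    and k: "k \<in> {1..N}"
    and tstar: "tstar \<ge> t0"
    and init: "\<And>i. i \<in> {1..k} \<Longrightarrow> x i tstar \<in> {- s k .. s k}"
  shows "\<forall>i\<in>{1..k}. \<forall>t\<ge>tstar. x i t \<in> {- s k .. s k}"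
proof -
  define c where "c = s k"
  define F where "F i = rhs N s \<alpha> x i" for i
  have kk: "1 \<le> k" "k \<le> N" using k by auto
  have s_le: "s j \<le> s i" if "i \<in> {1..N}" "j \<in> {1..N}" "i \<le> j" for i j
    using s_dec[of i j] that by (cases "i = j") auto
  have c_pos: "c > 0" using s_le[of k N] kk s_pos unfolding c_def by auto
  have sj_pos: "s j > 0" if "j \<in> {1..N}" for j using s_le[of j N] that kk s_pos by auto
  have sE: "s j \<le> c" if "j \<in> {k..N}" for j using s_le[of k j] that kk unfolding c_def by auto
  define d where "d = (if 2 \<le> k then s (k - 1) else c + 2)"
  define m where "m = (c + d) / 2"
  have cd: "c < d"
  proof (cases "2 \<le> k")
    case True
    then have "k - 1 \<in> {1..N}" "k - 1 < k" using kk by auto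
    then show ?thesis unfolding d_def c_def using s_dec[of "k-1" k] k True by auto
  qed (auto simp: d_def)
  have cm: "c < m" unfolding m_def using cd by simp
  have sI: "\<forall>i\<in>{1..<k}. m < s i"
  proof
    fix i assume i: "i \<in> {1..<k}"
    then have "2 \<le> k" by auto
    then have "d = s (k-1)" unfolding d_def by simp
    moreover have "s (k-1) \<le> s i" using s_le[of i "k-1"] i kk by auto
    ultimately show "m < s i" using cd unfolding m_def by simp
  qed
  have W: "\<forall>i\<in>{1..N}. \<forall>j\<in>{1..N}. \<forall>t\<ge>0. \<alpha> i j t = \<alpha> j i t \<and> \<alpha> i j t \<ge> 0"
    using weights unfolding weights_ok_def by (rule conjunct1)
  have solI: "F i absolutely_integrable_on {t0..t}" "x i t = x i t0 + integral {t0..t} (F i)"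
    if "i \<in> {1..N}" "t0 \<le> t" for i t
  proof -
    have "\<forall>i\<in>{1..N}. \<forall>t\<ge>t0. rhs N s \<alpha> x i absolutely_integrable_on {t0..t} \<and> x i t = x i t0 + integral {t0..t} (rhs N s \<alpha> x i)"
      using sol unfolding carath_solution_def .
    then have "rhs N s \<alpha> x i absolutely_integrable_on {t0..t} \<and> x i t = x i t0 + integral {t0..t} (rhs N s \<alpha> x i)"
      using that by blast
    then show "F i absolutely_integrable_on {t0..t}" "x i t = x i t0 + integral {t0..t} (F i)"
      unfolding F_def by auto
  qed
  have ftc: "x i v - x i u = integral {u..v} (F i)" if "i \<in> {1..N}" "t0 \<le> u" "u \<le> v" for i u v
  proof -
    have tv: "t0 \<le> v" using that by linarith
    have "F i integrable_on {t0..v}" using solI(1)[OF that(1) tv] by (rule absint_int)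
    then have e: "integral {t0..u} (F i) + integral {u..v} (F i) = integral {t0..v} (F i)"
      by (rule Henstock_Kurzweil_Integration.integral_combine[OF that(2) that(3)])
    have "x i u = x i t0 + integral {t0..u} (F i)" using solI(2)[OF that(1) that(2)] .
    moreover have "x i v = x i t0 + integral {t0..v} (F i)" using solI(2)[OF that(1) tv] .
    ultimately show ?thesis using e by linarith
  qed
  have contx: "continuous_on {a..b} (x i)" if "i \<in> {1..N}" "t0 \<le> a" for i a b
  proof (cases "a \<le> b")
    case True
    have tb: "t0 \<le> b" using True that by linarith
    have "F i integrable_on {t0..b}" using solI(1)[OF that(1) tb] by (rule absint_int)
    then have "continuous_on {t0..b} (\<lambda>t. integral {t0..t} (F i))"
      by (rule indefinite_integral_continuous_1)
    then have "continuous_on {t0..b} (\<lambda>t. x i t0 + integral {t0..t} (F i))"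
      by (rule continuous_on_add[OF continuous_on_const])
    then have cx: "continuous_on {t0..b} (x i)"
    proof (rule continuous_on_eq)
      fix t assume "t \<in> {t0..b}"
      then have "t0 \<le> t" by simp
      then show "x i t0 + integral {t0..t} (F i) = x i t" using solI(2)[OF that(1) \<open>t0 \<le> t\<close>] by linarith
    qed
    have "{a..b} \<subseteq> {t0..b}" using that by auto
    with cx show ?thesis by (rule continuous_on_subset)
  next
    case False then show ?thesis by simp
  qed
  have absI: "F i absolutely_integrable_on {a..b}" if "i \<in> {1..N}" "t0 \<le> a" for i a b
  proof (cases "a \<le> b")
    case True
    have tb: "t0 \<le> b" using True that by linarith
    have "{a..b} \<subseteq> {t0..b}" using that by auto
    then show ?thesis by (rule absolutely_integrable_on_subinterval[OF solI(1)[OF that(1) tb]])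
  next
    case False then show ?thesis by (simp add: absolutely_integrable_on_def)
  qed
  have step1: "\<bar>x i t\<bar> \<le> c" if i: "i \<in> {1..<k}" and t: "tstar \<le> t" for i t
  proof -
    have "(\<Sum>i\<in>{1..<k}. Phi2 c m (x i t)) \<le> (\<Sum>i\<in>{1..<k}. Phi2 c m (x i tstar))"
    proof (rule lyap[where f=F and \<psi>="D c m" and \<Phi>="Phi2 c m" and y=x and a=tstar and b=t and I="{1..<k}"])
      show "finite {1..<k}" by simp
      show "tstar \<le> t" by fact
      show "\<forall>i\<in>{1..<k}. continuous_on {tstar..t} (x i)" using contx tstar kk by auto
      show "\<forall>i\<in>{1..<k}. F i absolutely_integrable_on {tstar..t}" using absI tstar kk by auto
      show "\<forall>i\<in>{1..<k}. \<forall>u v. tstar \<le> u \<longrightarrow> u \<le> v \<longrightarrow> v \<le> t \<longrightarrow> x i v - x i u = integral {u..v} (F i)"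
        using ftc tstar kk by auto
      show "\<forall>u v. Phi2 c m v - Phi2 c m u \<le> D c m v * (v - u)" using Phi2_conv[OF cm] by blast
      show "continuous_on UNIV (D c m)" by (rule D_cont)
      show "\<forall>\<tau>\<in>{tstar..t}. (\<Sum>i\<in>{1..<k}. D c m (x i \<tau>) * F i \<tau>) \<le> 0"
      proof
        fix \<tau> assume \<tau>: "\<tau> \<in> {tstar..t}"
        have "(\<Sum>i\<in>{1..<k}. D c m (x i \<tau>) * (\<Sum>j\<in>{1..N}. \<alpha> i j \<tau> * (sat (s j) (x j \<tau>) - sat (s i) (x i \<tau>)))) \<le> 0"
        proof (rule pointwise[OF kk c_pos cm sI])
          show "\<forall>j\<in>{k..N}. \<bar>sat (s j) (x j \<tau>)\<bar> \<le> c"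
          proof
            fix j assume j: "j \<in> {k..N}"
            then have "j \<in> {1..N}" using kk by auto
            then have "\<bar>sat (s j) (x j \<tau>)\<bar> \<le> s j" using sat_bound sj_pos less_imp_le by blast
            then show "\<bar>sat (s j) (x j \<tau>)\<bar> \<le> c" using sE[OF j] by linarith
          qed
          show "\<forall>i\<in>{1..N}. \<forall>j\<in>{1..N}. \<alpha> i j \<tau> = \<alpha> j i \<tau> \<and> 0 \<le> \<alpha> i j \<tau>"
          proof (intro ballI)
            fix i j assume "i \<in> {1..N}" "j \<in> {1..N}"
            moreover have "\<tau> \<ge> 0" using \<tau> tstar t0 by auto
            ultimately show "\<alpha> i j \<tau> = \<alpha> j i \<tau> \<and> 0 \<le> \<alpha> i j \<tau>" using W by blast
          qed
        qed
        then show "(\<Sum>i\<in>{1..<k}. D c m (x i \<tau>) * F i \<tau>) \<le> 0"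
          unfolding F_def rhs_def .
      qed
    qed
    also have "\<dots> = 0"
    proof (intro sum.neutral ballI Phi2_zero)
      fix i assume "i \<in> {1..<k}"
      then have "i \<in> {1..k}" by auto
      then show "\<bar>x i tstar\<bar> \<le> c" using init[of i] unfolding c_def by auto
    qed
    finally have le0: "(\<Sum>i\<in>{1..<k}. Phi2 c m (x i t)) \<le> 0" .
    have "Phi2 c m (x i t) \<le> (\<Sum>i\<in>{1..<k}. Phi2 c m (x i t))"
      using i Phi2_nonneg[OF cm] by (intro member_le_sum) auto
    then have "Phi2 c m (x i t) \<le> 0" using le0 by linarith
    then show ?thesis using Phi2_pos[OF cm, of "x i t"] by linarith
  qed
  have satj: "\<bar>sat (s j) (x j \<tau>)\<bar> \<le> c" if j: "j \<in> {1..N}" "j \<noteq> k" and \<tau>: "tstar \<le> \<tau>" for j \<tau>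
  proof (cases "j < k")
    case True
    then have "\<bar>x j \<tau>\<bar> \<le> c" using step1 j \<tau> by auto
    then show ?thesis using sat_abs_le[of "s j" "x j \<tau>"] sj_pos[OF j(1)] by linarith
  next
    case False
    then show ?thesis using sat_bound[of "s j" "x j \<tau>"] sj_pos[OF j(1)] sE[of j] j by auto
  qed
  have Wk: "\<alpha> k j \<tau> \<ge> 0" if "j \<in> {1..N}" "tstar \<le> \<tau>" for j \<tau>
  proof -
    have "\<tau> \<ge> 0" using that tstar t0 by auto
    then show ?thesis using W that k by blast
  qed
  have step2: "\<bar>x k t\<bar> \<le> c" if t: "tstar \<le> t" for t
  proof -
    have k1: "k \<in> {1..N}" by fact
    have up: "x k t \<le> c"
    proof (rule lastcross[where f="F k" and y="x k" and a=tstar and b=t])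
      show "tstar \<le> t" by fact
      show "continuous_on {tstar..t} (x k)" using contx k1 tstar by auto
      show "\<forall>u v. tstar \<le> u \<longrightarrow> u \<le> v \<longrightarrow> v \<le> t \<longrightarrow> x k v - x k u = integral {u..v} (F k)"
        using ftc k1 tstar by auto
      show "F k integrable_on {tstar..t}" using absI[OF k1 tstar] absint_int by blast
      show "x k tstar \<le> c" using init[of k] kk unfolding c_def by auto
      show "\<forall>\<tau>\<in>{tstar..t}. c \<le> x k \<tau> \<longrightarrow> F k \<tau> \<le> 0"
      proof (intro ballI impI)
        fix \<tau> assume \<tau>: "\<tau> \<in> {tstar..t}" and xc: "c \<le> x k \<tau>"
        have sk: "sat (s k) (x k \<tau>) = c" using sat_hi[of c "x k \<tau>"] xc c_pos unfolding c_def by auto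
        show "F k \<tau> \<le> 0" unfolding F_def rhs_def sk
        proof (intro sum_nonpos)
          fix j assume j: "j \<in> {1..N}"
          have "sat (s j) (x j \<tau>) - c \<le> 0"
          proof (cases "j = k")
            case True then show ?thesis using sk by simp
          next
            case False
            have "tstar \<le> \<tau>" using \<tau> by simp
            then have "\<bar>sat (s j) (x j \<tau>)\<bar> \<le> c" using satj[OF j False] by blast
            then show ?thesis by linarith
          qed
          then show "\<alpha> k j \<tau> * (sat (s j) (x j \<tau>) - c) \<le> 0"
            using Wk[OF j] \<tau> by (intro mult_nonneg_nonpos) auto
        qed
      qed
    qed
    have lo: "- x k t \<le> c"
    proof (rule lastcross[where y="\<lambda>t. - x k t" and f="\<lambda>t. - F k t" and a=tstar and b=t])
      show "tstar \<le> t" by fact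
      show "continuous_on {tstar..t} (\<lambda>t. - x k t)" using contx k1 tstar by (auto intro: continuous_intros)
      show "\<forall>u v. tstar \<le> u \<longrightarrow> u \<le> v \<longrightarrow> v \<le> t \<longrightarrow> - x k v - - x k u = integral {u..v} (\<lambda>t. - F k t)"
      proof (intro allI impI)
        fix u v assume uv: "tstar \<le> u" "u \<le> v" "v \<le> t"
        then have "x k v - x k u = integral {u..v} (F k)" using ftc[OF k1, of u v] tstar by linarith
        then show "- x k v - - x k u = integral {u..v} (\<lambda>t. - F k t)" by (simp add: integral_neg)
      qed
      show "(\<lambda>t. - F k t) integrable_on {tstar..t}" using absI[OF k1 tstar] absint_int integrable_neg by blast
      show "- x k tstar \<le> c" using init[of k] kk unfolding c_def by auto
      show "\<forall>\<tau>\<in>{tstar..t}. c \<le> - x k \<tau> \<longrightarrow> - F k \<tau> \<le> 0"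
      proof (intro ballI impI)
        fix \<tau> assume \<tau>: "\<tau> \<in> {tstar..t}" and xc: "c \<le> - x k \<tau>"
        have sk: "sat (s k) (x k \<tau>) = - c" using sat_lo[of c "x k \<tau>"] xc c_pos unfolding c_def by auto
        have "F k \<tau> \<ge> 0" unfolding F_def rhs_def sk
        proof (intro sum_nonneg)
          fix j assume j: "j \<in> {1..N}"
          have "sat (s j) (x j \<tau>) - - c \<ge> 0"
          proof (cases "j = k")
            case True then show ?thesis using sk by simp
          next
            case False
            have "tstar \<le> \<tau>" using \<tau> by simp
            then have "\<bar>sat (s j) (x j \<tau>)\<bar> \<le> c" using satj[OF j False] by blast
            then show ?thesis by linarith
          qed
          then show "\<alpha> k j \<tau> * (sat (s j) (x j \<tau>) - - c) \<ge> 0"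
            using Wk[OF j] \<tau> by (intro mult_nonneg_nonneg) auto
        qed
        then show "- F k \<tau> \<le> 0" by simp
      qed
    qed
    show ?thesis using up lo by auto
  qed
  show ?thesis
  proof (intro ballI allI impI)
    fix i t assume i: "i \<in> {1..k}" and t: "tstar \<le> t"
    show "x i t \<in> {- s k .. s k}"
    proof (cases "i = k")
      case True then show ?thesis using step2[OF t] unfolding c_def by auto
    next
      case False then have "i \<in> {1..<k}" using i by auto
      then have "\<bar>x i t\<bar> \<le> c" using step1 t by blast
      then show ?thesis unfolding c_def by auto
    qed
  qed
qed

end
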